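(* Let $C\in M_n(\mathbb{C})$, $D=I-C^*C$, and define for $t\in\mathbb{R}$ $$H(t)=\tfrac12(e^{-it}C+e^{it}C^* ),\qquad K(t)=\tfrac{i}{2}(e^{it}C^*-e^{-it}C),$$ $$T_1(t,\mu)=\operatorname{tr}\bigl((\mu I-H(t))^{-1}K(t)\bigr),\qquad T_2(t,\lambda)=\operatorname{tr}\bigl((\lambda^2I-\lambda H(t)-\tfrac14 D)^{-1}\lambda K(t)\bigr),$$ regarded as rational functions of $\mu$ (resp. $\lambda$) for each $t$. Let $P_C(x,y)=\det(I-xC-yC^* )$ and $Q_C(x,y)=\det(I-xC-yC^*-xyD)$. Then: (1) $T_1\equiv0$ (for all $t$ and all $\mu$) if and only if $P_C(x,y)\in\mathbb{C}[xy]$; (2) $T_2\equiv0$ if and only if $Q_C(x,y)\in\mathbb{C}[xy]$.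
   Context: $\mathbb{C}[xy]$ denotes the set of polynomials in $x,y$ that are polynomials in the single product $xy$. *)

theory Defs
  imports "HOL-Analysis.Analysis" "HOL-Computational_Algebra.Polynomial"
begin

definition cstar :: "complex^'n^'n \<Rightarrow> complex^'n^'n" where
  "cstar C = (\<chi> i j. cnj (C $ j $ i))"

definition cscale :: "complex \<Rightarrow> complex^'n^'n \<Rightarrow> complex^'n^'n" where
  "cscale c A = (\<chi> i j. c * A $ i $ j)"

definition Dmat :: "complex^'n^'n \<Rightarrow> complex^'n^'n" where
  "Dmat C = mat 1 - cstar C ** C"

definition Hmat :: "complex^'n^'n \<Rightarrow> real \<Rightarrow> complex^'n^'n" where
  "Hmat C t = cscale (1/2) (cscale (exp (- \<i> * of_real t)) C + cscale (exp (\<i> * of_real t)) (cstar C))"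

definition Kmat :: "complex^'n^'n \<Rightarrow> real \<Rightarrow> complex^'n^'n" where
  "Kmat C t = cscale (\<i>/2) (cscale (exp (\<i> * of_real t)) (cstar C) - cscale (exp (- \<i> * of_real t)) C)"

text \<open>T_1(t,mu) and T_2(t,lambda); meaningful where the matrix to be inverted is invertible.\<close>
definition T1 :: "complex^'n^'n \<Rightarrow> real \<Rightarrow> complex \<Rightarrow> complex" where
  "T1 C t \<mu> = trace (matrix_inv (cscale \<mu> (mat 1) - Hmat C t) ** Kmat C t)"

definition M2 :: "complex^'n^'n \<Rightarrow> real \<Rightarrow> complex \<Rightarrow> complex^'n^'n" where
  "M2 C t l = cscale (l^2) (mat 1) - cscale l (Hmat C t) - cscale (1/4) (Dmat C)"

definition T2 :: "complex^'n^'n \<Rightarrow> real \<Rightarrow> complex \<Rightarrow> complex" where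
  "T2 C t l = trace (matrix_inv (M2 C t l) ** cscale l (Kmat C t))"

definition PC :: "complex^'n^'n \<Rightarrow> complex \<Rightarrow> complex \<Rightarrow> complex" where
  "PC C x y = det (mat 1 - cscale x C - cscale y (cstar C))"

definition QC :: "complex^'n^'n \<Rightarrow> complex \<Rightarrow> complex \<Rightarrow> complex" where
  "QC C x y = det (mat 1 - cscale x C - cscale y (cstar C) - cscale (x*y) (Dmat C))"

definition in_Cxy :: "(complex \<Rightarrow> complex \<Rightarrow> complex) \<Rightarrow> bool" where
  "in_Cxy F \<longleftrightarrow> (\<exists>p :: complex poly. \<forall>x y. F x y = poly p (x * y))"

end

theory Submission
  imports Defs "HOL-Complex_Analysis.Complex_Analysis"
begin

lemma minv: fixes A :: "complex^'n^'n" assumes "invertible A"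
  shows "A ** matrix_inv A = mat 1" "matrix_inv A ** A = mat 1"
  using someI_ex[OF assms[unfolded invertible_def]] unfolding matrix_inv_def by auto

lemma jacobi:
  fixes M :: "complex \<Rightarrow> complex^'n^'n"
  assumes d: "\<And>i j. ((\<lambda>z. M z $ i $ j) has_field_derivative M' $ i $ j) (at z)"
  and inv: "invertible (M z)"
  shows "((\<lambda>z. det (M z)) has_field_derivative det (M z) * trace (matrix_inv (M z) ** M')) (at z)"
proof -
  define R where "R j = (\<chi> i. if i = j then row j M' else row i (M z))" for j
  define P where "P = {p. p permutes (UNIV :: 'n set)}"
  have 1: "((\<lambda>z. det (M z)) has_field_derivative
     (\<Sum>p\<in>P. of_int (sign p) * (\<Sum>j\<in>UNIV. M' $ j $ p j * (\<Prod>i\<in>UNIV-{j}. M z $ i $ p i)))) (at z)"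
    unfolding det_def P_def
    by (intro DERIV_sum DERIV_cmult has_field_derivative_prod d)
  have 2: "det (R j) = (\<Sum>p\<in>P. of_int (sign p) * (M' $ j $ p j * (\<Prod>i\<in>UNIV-{j}. M z $ i $ p i)))" for j
  proof -
    have "(\<Prod>i\<in>UNIV. R j $ i $ p i) = M' $ j $ p j * (\<Prod>i\<in>UNIV-{j}. M z $ i $ p i)" for p
      by (subst prod.remove[of _ j]) (auto simp: R_def row_def intro!: prod.cong)
    then show ?thesis unfolding det_def P_def by simp
  qed
  have 3: "(\<Sum>p\<in>P. of_int (sign p) * (\<Sum>j\<in>UNIV. M' $ j $ p j * (\<Prod>i\<in>UNIV-{j}. M z $ i $ p i)))
     = (\<Sum>j\<in>UNIV. det (R j))"
    unfolding 2 by (simp add: sum_distrib_left sum.swap[of _ P])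
  define N where "N = M' ** matrix_inv (M z)"
  have 4: "det (R j) = N $ j $ j * det (M z)" for j
  proof -
    have "(\<Sum>i\<in>UNIV. (row j N) $ i *s row i (M z)) = row j M'"
    proof -
      have "M' = N ** M z" unfolding N_def by (simp add: matrix_mul_assoc[symmetric] minv[OF inv])
      then show ?thesis
        by (simp add: vec_eq_iff row_def matrix_matrix_mult_def sum_component)
    qed
    then have "R j = (\<chi> i. if i = j then (\<Sum>i\<in>UNIV. (row j N) $ i *s row i (M z)) else row i (M z))"
      unfolding R_def by (simp add: fun_eq_iff)
    then show ?thesis using cramer_lemma_transpose[where A="M z" and x="row j N" and k=j] by (simp add: row_def)
  qed
  have 5: "(\<Sum>j\<in>UNIV. det (R j)) = det (M z) * trace (matrix_inv (M z) ** M')"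
    unfolding 4 trace_mul_sym[of "matrix_inv (M z)"] N_def[symmetric]
    by (simp add: trace_def sum_distrib_left mult.commute)
  show ?thesis using 1 3 5 by simp
qed

lemma det_poly: fixes A B :: "complex^'n^'n"
  shows "\<exists>q. \<forall>u. det (A + cscale u B) = poly q u"
proof
  let ?q = "\<Sum>p\<in>{p. p permutes (UNIV::'n set)}. [:of_int (sign p):] * (\<Prod>i\<in>UNIV. [:A$i$p i, B$i$p i:])"
  show "\<forall>u. det (A + cscale u B) = poly ?q u"
    by (simp add: det_def poly_sum poly_prod cscale_def algebra_simps)
qed

lemma det_cscale: fixes A :: "complex^'n^'n"
  shows "det (cscale c A) = c ^ CARD('n) * det A"
  by (simp add: det_def cscale_def prod.distrib sum_distrib_left prod_constant algebra_simps)

lemma poly_eq_punct: fixes f g :: "complex poly"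
  assumes "\<And>y. y \<noteq> 0 \<Longrightarrow> poly f y = poly g y" shows "poly f 0 = poly g 0"
proof (cases "f = g")
  case False
  then have "finite {x. poly (f - g) x = 0}" by (intro poly_roots_finite) simp
  moreover have "UNIV - {0} \<subseteq> {x. poly (f - g) x = 0}" using assms by auto
  ultimately have "finite (UNIV - {0::complex})" by (rule finite_subset[rotated])
  then show ?thesis by (simp add: infinite_UNIV_char_0)
qed simp

lemma alg:
  fixes F :: "complex \<Rightarrow> complex \<Rightarrow> complex"
  assumes inv: "\<And>a w. w \<noteq> 0 \<Longrightarrow> F (w*a) (a/w) = F a a"
    and px: "\<And>x. \<exists>q. \<forall>y. F x y = poly q y"
    and py: "\<And>y. \<exists>q. \<forall>x. F x y = poly q x"
  shows "in_Cxy F"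
proof -
  obtain p where p: "\<And>u. F 1 u = poly p u" using px[of 1] by blast
  have c1: "F x y = poly p (x*y)" if "x \<noteq> 0" "y \<noteq> 0" for x y
  proof -
    define s where "s = csqrt (x*y)"
    have s0: "s \<noteq> 0" using that by (simp add: s_def)
    have ss: "s * s = x*y" unfolding s_def by (metis power2_csqrt power2_eq_square)
    have "F ((x/s) * s) (s/(x/s)) = F s s" using inv[of "x/s" s] s0 that by simp
    moreover have "(x/s) * s = x" "s/(x/s) = y" using s0 that ss by (auto simp: field_simps)
    moreover have "F ((1/s) * s) (s/(1/s)) = F s s" using inv[of "1/s" s] s0 by simp
    moreover have "(1/s) * s = 1" "s/(1/s) = x*y" using s0 ss by (auto simp: field_simps)
    ultimately show ?thesis using p by metis
  qed
  have c2: "F x y = poly p (x*y)" if "x \<noteq> 0" for x y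
  proof (cases "y = 0")
    case True
    obtain q where q: "\<And>y. F x y = poly q y" using px[of x] by blast
    have "poly q 0 = poly (pcompose p [:0,x:]) 0"
    proof (rule poly_eq_punct)
      fix y' :: complex assume "y' \<noteq> 0"
      then have "poly q y' = poly p (x*y')" using c1[of x y'] that q by simp
      then show "poly q y' = poly (pcompose p [:0,x:]) y'" by (simp add: poly_pcompose mult.commute)
    qed
    then show ?thesis using q True by (simp add: poly_pcompose)
  qed (use c1 that in auto)
  have c3: "F x y = poly p (x*y)" for x y
  proof (cases "x = 0")
    case True
    obtain q where q: "\<And>x. F x y = poly q x" using py[of y] by blast
    have "poly q 0 = poly (pcompose p [:0,y:]) 0"
    proof (rule poly_eq_punct)
      fix x' :: complex assume "x' \<noteq> 0"
      then have "poly q x' = poly p (x'*y)" using c2[of x' y] q by simp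
      then show "poly q x' = poly (pcompose p [:0,y:]) x'" by (simp add: poly_pcompose mult.commute)
    qed
    then show ?thesis using q True by (simp add: poly_pcompose)
  qed (use c2 in auto)
  then show ?thesis unfolding in_Cxy_def by blast
qed

lemma inv_from_exp:
  fixes F :: "complex \<Rightarrow> complex \<Rightarrow> complex"
  assumes "\<And>a z. F (exp(-\<i>*z)*a) (exp(\<i>*z)*a) = F a a" and "w \<noteq> 0"
  shows "F (w*a) (a/w) = F a a"
proof -
  have "exp(-\<i>*(\<i>*ln w)) = w" using assms(2) by simp
  moreover have "exp(\<i>*(\<i>*ln w)) = 1/w" using assms(2) by (simp add: exp_minus field_simps)
  ultimately show ?thesis using assms(1)[of "\<i>*ln w" a] by (simp add: field_simps)
qed

lemma limpt_real: "complex_of_real t0 islimpt (complex_of_real ` ball t0 e)" if "e > 0"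
proof (rule islimpt_approachable[THEN iffD2], intro allI impI)
  fix d :: real assume "d > 0"
  let ?t = "t0 + min e d / 2"
  have "?t \<in> ball t0 e" using \<open>e>0\<close> \<open>d>0\<close> by (auto simp: dist_real_def)
  moreover have "complex_of_real ?t \<noteq> complex_of_real t0" using \<open>e>0\<close> \<open>d>0\<close> by simp
  moreover have "dist (complex_of_real ?t) (complex_of_real t0) < d" using \<open>e>0\<close> \<open>d>0\<close>
    by (simp only: dist_of_real) (simp add: dist_real_def)
  ultimately show "\<exists>x'\<in>complex_of_real ` ball t0 e. x' \<noteq> complex_of_real t0 \<and> dist x' (complex_of_real t0) < d"
    by blast
qed

lemma const_entire:
  fixes \<phi> :: "complex \<Rightarrow> complex"
  assumes holo: "\<phi> holomorphic_on UNIV"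
    and h: "\<And>t::real. \<phi> (of_real t) \<noteq> 0 \<Longrightarrow> deriv \<phi> (of_real t) = 0"
  shows "\<phi> z = \<phi> 0"
proof (cases "\<forall>t::real. \<phi> (of_real t) = 0")
  case True
  have "\<phi> w = 0" for w
  proof (rule analytic_continuation[OF holo, of "complex_of_real ` ball 0 1" 0])
    show "0 islimpt complex_of_real ` ball 0 1" using limpt_real[of 1 0] by simp
    show "\<And>z. z \<in> complex_of_real ` ball 0 1 \<Longrightarrow> \<phi> z = 0" using True by blast
  qed auto
  then show ?thesis by simp
next
  case False
  then obtain t0 where t0: "\<phi> (of_real t0) \<noteq> 0" by auto
  have "continuous (at (complex_of_real t0)) \<phi>"
    by (meson continuous_on_eq_continuous_at holomorphic_on_imp_continuous_on open_UNIV UNIV_I holo)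
  then obtain e where e: "e > 0" "\<And>w. dist w (of_real t0) < e \<Longrightarrow> \<phi> w \<noteq> 0"
  proof -
    obtain d where d: "d > 0" "\<And>w. dist w (of_real t0) < d \<Longrightarrow> dist (\<phi> w) (\<phi> (of_real t0)) < norm (\<phi> (of_real t0))"
    proof -
      have pos: "norm (\<phi> (of_real t0)) > 0" using t0 by simp
      have "\<forall>e>0. \<exists>d>0. \<forall>x'. dist x' (of_real t0) < d \<longrightarrow> dist (\<phi> x') (\<phi> (of_real t0)) < e"
        using \<open>continuous (at (complex_of_real t0)) \<phi>\<close> unfolding continuous_at_eps_delta .
      from this[rule_format, OF pos] show ?thesis using that by blast
    qed
    show ?thesis
    proof (rule that[OF d(1)])
      fix w assume "dist w (complex_of_real t0) < d"
      from d(2)[OF this] show "\<phi> w \<noteq> 0" by (auto simp: dist_norm)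
    qed
  qed
  have dz: "deriv \<phi> w = 0" for w
  proof (rule analytic_continuation[of "deriv \<phi>" UNIV "complex_of_real ` ball t0 e" "of_real t0"])
    show "deriv \<phi> holomorphic_on UNIV" using holo by (rule holomorphic_deriv) simp
    show "of_real t0 islimpt (complex_of_real ` ball t0 e)" using limpt_real e(1) .
    fix z assume "z \<in> complex_of_real ` ball t0 e"
    then obtain t where "z = of_real t" "dist t0 t < e" by auto
    then show "deriv \<phi> z = 0" using h e(2)[of z]
      by (simp only: dist_of_real) (simp add: dist_commute)
  qed auto
  have "\<exists>c. \<forall>x\<in>UNIV. \<phi> x = c"
    by (rule has_field_derivative_zero_constant) (use holomorphic_derivI[OF holo] dz in auto)
  then show ?thesis by auto
qed

definition Hc :: "complex^'n^'n \<Rightarrow> complex \<Rightarrow> complex^'n^'n" where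
  "Hc C z = cscale (1/2) (cscale (exp (- \<i> * z)) C + cscale (exp (\<i> * z)) (cstar C))"
definition Kc :: "complex^'n^'n \<Rightarrow> complex \<Rightarrow> complex^'n^'n" where
  "Kc C z = cscale (\<i>/2) (cscale (exp (\<i> * z)) (cstar C) - cscale (exp (- \<i> * z)) C)"
definition M2c :: "complex^'n^'n \<Rightarrow> complex \<Rightarrow> complex \<Rightarrow> complex^'n^'n" where
  "M2c C z l = cscale (l^2) (mat 1) - cscale l (Hc C z) - cscale (1/4) (Dmat C)"

lemma Hmat_Hc: "Hmat C t = Hc C (of_real t)" by (simp add: Hmat_def Hc_def)
lemma Kmat_Kc: "Kmat C t = Kc C (of_real t)" by (simp add: Kmat_def Kc_def)
lemma M2_M2c: "M2 C t l = M2c C (of_real t) l" by (simp add: M2_def M2c_def Hmat_Hc)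

lemma Hc_entry: "Hc C z $ i $ j = (1/2) * (exp(-\<i>*z) * C$i$j + exp(\<i>*z) * cstar C $ i $ j)"
  by (simp add: Hc_def cscale_def)
lemma Kc_entry: "Kc C z $ i $ j = (\<i>/2) * (exp(\<i>*z) * cstar C $ i $ j - exp(-\<i>*z) * C$i$j)"
  by (simp add: Kc_def cscale_def)

lemma Hc_deriv: "((\<lambda>z. Hc C z $ i $ j) has_field_derivative Kc C z $ i $ j) (at z)"
  unfolding Hc_entry Kc_entry by (auto intro!: derivative_eq_intros simp: algebra_simps)

lemma M1_deriv: "((\<lambda>z. (cscale \<mu> (mat 1) - Hc C z) $ i $ j) has_field_derivative (- Kc C z) $ i $ j) (at z)"
proof -
  have e: "(\<lambda>z. (cscale \<mu> (mat 1) - Hc C z) $ i $ j) = (\<lambda>z. \<mu> * mat 1 $ i $ j - Hc C z $ i $ j)"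
    by (simp add: cscale_def fun_eq_iff)
  show ?thesis unfolding e using DERIV_diff[OF DERIV_const Hc_deriv] by simp
qed

lemma M2_deriv: "((\<lambda>z. M2c C z l $ i $ j) has_field_derivative (- cscale l (Kc C z)) $ i $ j) (at z)"
proof -
  have e: "(\<lambda>z. M2c C z l $ i $ j) = (\<lambda>z. l^2 * mat 1 $ i $ j - l * Hc C z $ i $ j - 1/4 * Dmat C $ i $ j)"
    by (simp add: M2c_def cscale_def fun_eq_iff)
  show ?thesis unfolding e using DERIV_diff[OF DERIV_diff[OF DERIV_const DERIV_cmult[OF Hc_deriv]] DERIV_const]
    by (simp add: cscale_def)
qed

lemma holo_det:
  fixes M :: "complex \<Rightarrow> complex^'n^'n"
  assumes d: "\<And>z i j. ((\<lambda>z. M z $ i $ j) has_field_derivative M' z $ i $ j) (at z)"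
  shows "(\<lambda>z. det (M z)) holomorphic_on UNIV"
proof -
  have e: "(\<lambda>z. M z $ i $ j) holomorphic_on UNIV" for i j
    using d by (auto simp: holomorphic_on_open)
  show ?thesis unfolding det_def
    by (intro holomorphic_on_sum holomorphic_on_mult holomorphic_on_const holomorphic_on_prod e)
qed

lemma fwd_generic:
  fixes M :: "complex \<Rightarrow> complex^'n^'n"
  assumes d: "\<And>z i j. ((\<lambda>z. M z $ i $ j) has_field_derivative M' z $ i $ j) (at z)"
    and h: "\<And>t::real. invertible (M (of_real t)) \<Longrightarrow> trace (matrix_inv (M (of_real t)) ** M' (of_real t)) = 0"
  shows "det (M z) = det (M 0)"
proof (rule const_entire[where \<phi>="\<lambda>z. det (M z)"])
  show "(\<lambda>z. det (M z)) holomorphic_on UNIV" by (rule holo_det[OF d])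
  fix t :: real assume "det (M (of_real t)) \<noteq> 0"
  then have inv: "invertible (M (of_real t))" by (simp add: invertible_det_nz)
  have "((\<lambda>z. det (M z)) has_field_derivative det (M (of_real t)) * trace (matrix_inv (M (of_real t)) ** M' (of_real t))) (at (of_real t))"
    by (rule jacobi[OF d inv])
  then have "((\<lambda>z. det (M z)) has_field_derivative 0) (at (of_real t))" using h[OF inv] by simp
  then show "deriv (\<lambda>z. det (M z)) (of_real t) = 0" by (rule DERIV_imp_deriv)
qed

lemma bwd_generic:
  fixes M :: "complex \<Rightarrow> complex^'n^'n"
  assumes d: "\<And>i j. ((\<lambda>z. M z $ i $ j) has_field_derivative M' $ i $ j) (at z)"
    and inv: "invertible (M z)" and c: "\<And>w. det (M w) = det (M z)"
  shows "trace (matrix_inv (M z) ** M') = 0"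
proof -
  have 1: "((\<lambda>z. det (M z)) has_field_derivative det (M z) * trace (matrix_inv (M z) ** M')) (at z)"
    by (rule jacobi[OF d inv])
  have "(\<lambda>w. det (M w)) = (\<lambda>w. det (M z))" using c by auto
  then have 2: "((\<lambda>z. det (M z)) has_field_derivative 0) (at z)" by (simp add: DERIV_const)
  have "det (M z) * trace (matrix_inv (M z) ** M') = 0" using DERIV_unique[OF 1 2] .
  moreover have "det (M z) \<noteq> 0" using inv by (simp add: invertible_det_nz)
  ultimately show ?thesis by simp
qed

lemma trace_neg: fixes A B :: "complex^'n^'n" shows "trace (A ** (- B)) = - trace (A ** B)"
  by (simp add: trace_def matrix_matrix_mult_def sum_negf)

lemma em: "exp(-\<i>*z) = 1 / exp(\<i>*z)"
  by (metis exp_minus inverse_eq_divide mult_minus_left)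

lemma scale1: fixes C :: "complex^'n^'n" assumes "\<mu> \<noteq> 0"
  shows "det (cscale \<mu> (mat 1) - Hc C z) = \<mu> ^ CARD('n) * PC C (exp(-\<i>*z)/(2*\<mu>)) (exp(\<i>*z)/(2*\<mu>))"
proof -
  have "cscale \<mu> (mat 1) - Hc C z = cscale \<mu> (mat 1 - cscale (exp(-\<i>*z)/(2*\<mu>)) C - cscale (exp(\<i>*z)/(2*\<mu>)) (cstar C))"
    using assms by (simp add: vec_eq_iff cscale_def Hc_def mat_def field_simps)
  then show ?thesis by (simp add: PC_def det_cscale)
qed

lemma ee: "exp (\<i> * z) * exp (- (\<i> * z)) = 1" by (simp add: exp_minus)

lemma scale2: fixes C :: "complex^'n^'n" assumes "l \<noteq> 0"
  shows "det (M2c C z l) = (l^2) ^ CARD('n) * QC C (exp(-\<i>*z)/(2*l)) (exp(\<i>*z)/(2*l))"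
proof -
  have "M2c C z l = cscale (l^2) (mat 1 - cscale (exp(-\<i>*z)/(2*l)) C - cscale (exp(\<i>*z)/(2*l)) (cstar C)
      - cscale ((exp(-\<i>*z)/(2*l)) * (exp(\<i>*z)/(2*l))) (Dmat C))"
    using assms unfolding em by (simp add: vec_eq_iff cscale_def Hc_def M2c_def mat_def field_simps power2_eq_square ee)
  then show ?thesis by (simp add: QC_def det_cscale)
qed

lemma PC_px: "\<exists>q. \<forall>y. PC C x y = poly q y"
proof -
  obtain q where "\<forall>u. det ((mat 1 - cscale x C) + cscale u (- cstar C)) = poly q u" using det_poly by blast
  moreover have "(mat 1 - cscale x C) + cscale u (- cstar C) = mat 1 - cscale x C - cscale u (cstar C)" for u
    by (simp add: vec_eq_iff cscale_def)
  ultimately show ?thesis unfolding PC_def by auto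
qed
lemma PC_py: "\<exists>q. \<forall>x. PC C x y = poly q x"
proof -
  obtain q where "\<forall>u. det ((mat 1 - cscale y (cstar C)) + cscale u (- C)) = poly q u" using det_poly by blast
  moreover have "(mat 1 - cscale y (cstar C)) + cscale u (- C) = mat 1 - cscale u C - cscale y (cstar C)" for u
    by (simp add: vec_eq_iff cscale_def)
  ultimately show ?thesis unfolding PC_def by auto
qed
lemma QC_px: "\<exists>q. \<forall>y. QC C x y = poly q y"
proof -
  obtain q where "\<forall>u. det ((mat 1 - cscale x C) + cscale u (- cstar C - cscale x (Dmat C))) = poly q u" using det_poly by blast
  moreover have "(mat 1 - cscale x C) + cscale u (- cstar C - cscale x (Dmat C)) = mat 1 - cscale x C - cscale u (cstar C) - cscale (x*u) (Dmat C)" for u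
    by (simp add: vec_eq_iff cscale_def algebra_simps)
  ultimately show ?thesis unfolding QC_def by auto
qed
lemma QC_py: "\<exists>q. \<forall>x. QC C x y = poly q x"
proof -
  obtain q where "\<forall>u. det ((mat 1 - cscale y (cstar C)) + cscale u (- C - cscale y (Dmat C))) = poly q u" using det_poly by blast
  moreover have "(mat 1 - cscale y (cstar C)) + cscale u (- C - cscale y (Dmat C)) = mat 1 - cscale u C - cscale y (cstar C) - cscale (u*y) (Dmat C)" for u
    by (simp add: vec_eq_iff cscale_def algebra_simps)
  ultimately show ?thesis unfolding QC_def by auto
qed

lemma part1_fwd: fixes C :: "complex^'n^'n"
  assumes hyp: "\<forall>t \<mu>. invertible (cscale \<mu> (mat 1) - Hmat C t) \<longrightarrow> T1 C t \<mu> = 0"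
  shows "in_Cxy (PC C)"
proof (rule alg[OF _ PC_px PC_py])
  have key: "PC C (exp(-\<i>*z)*a) (exp(\<i>*z)*a) = PC C a a" for a z
  proof (cases "a = 0")
    case False
    define \<mu> where "\<mu> = 1/(2*a)"
    have mu: "\<mu> \<noteq> 0" using False by (simp add: \<mu>_def)
    have "det (cscale \<mu> (mat 1) - Hc C z) = det (cscale \<mu> (mat 1) - Hc C 0)"
    proof (rule fwd_generic[where M'="\<lambda>z. - Kc C z"])
      show "((\<lambda>z. (cscale \<mu> (mat 1) - Hc C z) $ i $ j) has_field_derivative (- Kc C z) $ i $ j) (at z)" for z i j
        by (rule M1_deriv)
      fix t :: real assume "invertible (cscale \<mu> (mat 1) - Hc C (of_real t))"
      then have "T1 C t \<mu> = 0" using hyp by (simp add: Hmat_Hc)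
      then show "trace (matrix_inv (cscale \<mu> (mat 1) - Hc C (of_real t)) ** - Kc C (of_real t)) = 0"
        by (simp add: trace_neg T1_def Hmat_Hc Kmat_Kc)
    qed
    then have "\<mu> ^ CARD('n) * PC C (exp(-\<i>*z)/(2*\<mu>)) (exp(\<i>*z)/(2*\<mu>)) = \<mu> ^ CARD('n) * PC C (1/(2*\<mu>)) (1/(2*\<mu>))"
      using scale1[OF mu, of C z] scale1[OF mu, of C 0] by simp
    moreover have "exp(-\<i>*z)/(2*\<mu>) = exp(-\<i>*z)*a" "exp(\<i>*z)/(2*\<mu>) = exp(\<i>*z)*a" "1/(2*\<mu>) = a"
      using False by (auto simp: \<mu>_def)
    ultimately show ?thesis using mu by simp
  qed simp
  show "\<And>a w. w \<noteq> 0 \<Longrightarrow> PC C (w*a) (a/w) = PC C a a"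
    by (rule inv_from_exp) (use key in auto)
qed

lemma part2_fwd: fixes C :: "complex^'n^'n"
  assumes hyp: "\<forall>t l. invertible (M2 C t l) \<longrightarrow> T2 C t l = 0"
  shows "in_Cxy (QC C)"
proof (rule alg[OF _ QC_px QC_py])
  have key: "QC C (exp(-\<i>*z)*a) (exp(\<i>*z)*a) = QC C a a" for a z
  proof (cases "a = 0")
    case False
    define l where "l = 1/(2*a)"
    have l0: "l \<noteq> 0" using False by (simp add: l_def)
    have "det (M2c C z l) = det (M2c C 0 l)"
    proof (rule fwd_generic[where M'="\<lambda>z. - cscale l (Kc C z)" and M="\<lambda>z. M2c C z l"])
      show "((\<lambda>z. M2c C z l $ i $ j) has_field_derivative (- cscale l (Kc C z)) $ i $ j) (at z)" for z i j
        by (rule M2_deriv)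
      fix t :: real assume "invertible (M2c C (of_real t) l)"
      then have "T2 C t l = 0" using hyp by (simp add: M2_M2c)
      then show "trace (matrix_inv (M2c C (of_real t) l) ** - cscale l (Kc C (of_real t))) = 0"
        by (simp add: trace_neg T2_def M2_M2c Kmat_Kc)
    qed
    then have "(l^2) ^ CARD('n) * QC C (exp(-\<i>*z)/(2*l)) (exp(\<i>*z)/(2*l)) = (l^2) ^ CARD('n) * QC C (1/(2*l)) (1/(2*l))"
      using scale2[OF l0, of C z] scale2[OF l0, of C 0] by simp
    moreover have "exp(-\<i>*z)/(2*l) = exp(-\<i>*z)*a" "exp(\<i>*z)/(2*l) = exp(\<i>*z)*a" "1/(2*l) = a"
      using False by (auto simp: l_def)
    ultimately show ?thesis using l0 by simp
  qed simp
  show "\<And>a w. w \<noteq> 0 \<Longrightarrow> QC C (w*a) (a/w) = QC C a a"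
    by (rule inv_from_exp) (use key in auto)
qed

lemma part1_bwd: fixes C :: "complex^'n^'n"
  assumes "in_Cxy (PC C)"
  shows "\<forall>t \<mu>. invertible (cscale \<mu> (mat 1) - Hmat C t) \<longrightarrow> T1 C t \<mu> = 0"
proof (intro allI impI)
  obtain p where p: "\<And>x y. PC C x y = poly p (x*y)" using assms unfolding in_Cxy_def by blast
  have cnz: "det (cscale \<mu> (mat 1) - Hc C z) = det (cscale \<mu> (mat 1) - Hc C w)" if "\<mu> \<noteq> 0" for \<mu> z w
  proof -
    have "exp(-\<i>*z)/(2*\<mu>) * (exp(\<i>*z)/(2*\<mu>)) = 1/(4*\<mu>^2)" for z
      using that ee[of z] by (simp add: field_simps power2_eq_square)
    then show ?thesis using scale1[OF that, of C z] scale1[OF that, of C w] p by simp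
  qed
  have c: "det (cscale \<mu> (mat 1) - Hc C z) = det (cscale \<mu> (mat 1) - Hc C w)" for \<mu> z w
  proof (cases "\<mu> = 0")
    case True
    obtain q1 where q1: "\<And>u. det (- Hc C z + cscale u (mat 1)) = poly q1 u" using det_poly by blast
    obtain q2 where q2: "\<And>u. det (- Hc C w + cscale u (mat 1)) = poly q2 u" using det_poly by blast
    have e: "- Hc C v + cscale u (mat 1) = cscale u (mat 1) - Hc C v" for u v by (simp add: algebra_simps)
    have "poly q1 0 = poly q2 0"
      by (rule poly_eq_punct) (metis q1 q2 e cnz)
    then show ?thesis using q1[of 0] q2[of 0] True e by metis
  qed (rule cnz)
  fix t \<mu> assume inv: "invertible (cscale \<mu> (mat 1) - Hmat C t)"
  have "trace (matrix_inv (cscale \<mu> (mat 1) - Hc C (of_real t)) ** - Kc C (of_real t)) = 0"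
    by (rule bwd_generic[where M="\<lambda>z. cscale \<mu> (mat 1) - Hc C z"])
       (use M1_deriv inv c in \<open>auto simp: Hmat_Hc\<close>)
  then show "T1 C t \<mu> = 0" by (simp add: trace_neg T1_def Hmat_Hc Kmat_Kc)
qed

lemma part2_bwd: fixes C :: "complex^'n^'n"
  assumes "in_Cxy (QC C)"
  shows "\<forall>t l. invertible (M2 C t l) \<longrightarrow> T2 C t l = 0"
proof (intro allI impI)
  obtain p where p: "\<And>x y. QC C x y = poly p (x*y)" using assms unfolding in_Cxy_def by blast
  fix t l assume inv: "invertible (M2 C t l)"
  show "T2 C t l = 0"
  proof (cases "l = 0")
    case True
    then show ?thesis by (simp add: T2_def cscale_def trace_def matrix_matrix_mult_def)
  next
    case False
    have c: "det (M2c C z l) = det (M2c C w l)" for z w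
    proof -
      have "exp(-\<i>*z)/(2*l) * (exp(\<i>*z)/(2*l)) = 1/(4*l^2)" for z
        using False ee[of z] by (simp add: field_simps power2_eq_square)
      then show ?thesis using scale2[OF False, of C z] scale2[OF False, of C w] p by simp
    qed
    have "trace (matrix_inv (M2c C (of_real t) l) ** - cscale l (Kc C (of_real t))) = 0"
      by (rule bwd_generic[where M="\<lambda>z. M2c C z l"])
         (use M2_deriv inv c in \<open>auto simp: M2_M2c\<close>)
    then show "T2 C t l = 0" by (simp add: trace_neg T2_def M2_M2c Kmat_Kc)
  qed
qed

theorem mainTheorem9:
  fixes C :: "complex^'n^'n"
  shows "((\<forall>t \<mu>. invertible (cscale \<mu> (mat 1) - Hmat C t) \<longrightarrow> T1 C t \<mu> = 0) \<longleftrightarrow> in_Cxy (PC C))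
       \<and> ((\<forall>t l. invertible (M2 C t l) \<longrightarrow> T2 C t l = 0) \<longleftrightarrow> in_Cxy (QC C))"
  using part1_fwd part1_bwd part2_fwd part2_bwd by blast

end
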